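(* Let $h>0$, let $r\in\{2,4,8,16\}$, let $j\in\{1,\dots,r-1\}$ and put $\theta=j/r$. Place a hanging node at $P=(x_c,y_c)$ and consider the seven points $$A_\pm=(x_c-\theta h,\;y_c\pm h),\quad B_\pm=(x_c+(1-\theta)h,\;y_c\pm h),\quad C=(x_c-\theta h,\;y_c),\quad D=(x_c+(1-\theta)h,\;y_c),\quad P.$$ Define the seven-point scheme for $\Delta u=f$ $$\alpha_{A}\big(U_{A_+}+U_{A_-}\big)+\alpha_{B}\big(U_{B_+}+U_{B_-}\big)+\alpha_C U_C+\alpha_D U_D+\alpha_P U_P=\beta_C f_C+\beta_D f_D,$$ with $$h^2\alpha_A=\frac{2-\theta}{3},\quad h^2\alpha_B=\frac{1+\theta}{3},\quad h^2\alpha_C=\frac{2}{\theta}-\frac43+\frac{2\theta}{3},\quad h^2\alpha_D=\frac{2}{1-\theta}-\frac43+\frac{2(1-\theta)}{3},\quad h^2\alpha_P=-\frac{2}{\theta(1-\theta)},$$ $$\beta_C=\frac{2-\theta}{3},\qquad \beta_D=\frac{1+\theta}{3}$$ (all other weights of $f$, including the one at $P$, are zero). Then: (i) $\beta_C+\beta_D=1$, $\beta_C,\beta_D>0$, all of $\alpha_A,\alpha_B,\alpha_C,\alpha_D$ are positive and $\alpha_P<0$ with $\alpha_P=-(2\alpha_A+2\alpha_B+\alpha_C+\alpha_D)$; (ii) replacing $j$ by $r-j$ (i.e. $\theta$ by $1-\theta$) exchanges the roles of the left points $A_\pm,C$ and the right points $B_\pm,D$ (the coefficients appear in reverse order), and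 the coefficients depend on $j,r$ only through $j/r$; (iii) the scheme is exact for every polynomial $p(x,y)$ of total degree at most $4$ whose coefficients of $x^4$ and of $y^4$ vanish, i.e. for such $p$, $$\alpha_A\big(p(A_+)+p(A_-)\big)+\alpha_B\big(p(B_+)+p(B_-)\big)+\alpha_C p(C)+\alpha_D p(D)+\alpha_P p(P)=\beta_C\,\Delta p(C)+\beta_D\,\Delta p(D).$$
   Context: Setting: a two-grid Cartesian discretization of the Poisson equation $\Delta u=f$ with a coarse mesh of size $h$ and a fine mesh of size $h/r$. A hanging node is a fine-grid point lying on a coarse grid line strictly between two consecutive coarse grid points; here the coarse grid points are at $x=x_c-\theta h$ and $x=x_c+(1-\theta)h$ on the line $y=y_c$, and the neighboring coarse lines are $y=y_c\pm h$. $U_Q$ denotes the discrete approximation of $u(Q)$ and $f_Q=f(Q)$. *)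

theory Defs
  imports "HOL-Analysis.Analysis"
begin

definition theta :: "nat \<Rightarrow> nat \<Rightarrow> real" where
  "theta j r = real j / real r"

definition alphaA :: "real \<Rightarrow> nat \<Rightarrow> nat \<Rightarrow> real" where
  "alphaA h j r = ((2 - theta j r) / 3) / h\<^sup>2"

definition alphaB :: "real \<Rightarrow> nat \<Rightarrow> nat \<Rightarrow> real" where
  "alphaB h j r = ((1 + theta j r) / 3) / h\<^sup>2"

definition alphaC :: "real \<Rightarrow> nat \<Rightarrow> nat \<Rightarrow> real" where
  "alphaC h j r = (2 / theta j r - 4/3 + 2 * theta j r / 3) / h\<^sup>2"

definition alphaD :: "real \<Rightarrow> nat \<Rightarrow> nat \<Rightarrow> real" where
  "alphaD h j r = (2 / (1 - theta j r) - 4/3 + 2 * (1 - theta j r) / 3) / h\<^sup>2"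

definition alphaP :: "real \<Rightarrow> nat \<Rightarrow> nat \<Rightarrow> real" where
  "alphaP h j r = (- 2 / (theta j r * (1 - theta j r))) / h\<^sup>2"

definition betaC :: "nat \<Rightarrow> nat \<Rightarrow> real" where
  "betaC j r = (2 - theta j r) / 3"

definition betaD :: "nat \<Rightarrow> nat \<Rightarrow> real" where
  "betaD j r = (1 + theta j r) / 3"

definition laplacian :: "(real \<Rightarrow> real \<Rightarrow> real) \<Rightarrow> real \<Rightarrow> real \<Rightarrow> real" where
  "laplacian f x y =
     deriv (\<lambda>s. deriv (\<lambda>t. f t y) s) x + deriv (\<lambda>s. deriv (\<lambda>t. f x t) s) y"

definition poly2 :: "(nat \<Rightarrow> nat \<Rightarrow> real) \<Rightarrow> real \<Rightarrow> real \<Rightarrow> real" where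
  "poly2 c x y = (\<Sum>i\<le>4. \<Sum>k\<le>4. c i k * x ^ i * y ^ k)"

definition scheme_lhs ::
  "real \<Rightarrow> nat \<Rightarrow> nat \<Rightarrow> (real \<Rightarrow> real \<Rightarrow> real) \<Rightarrow> real \<Rightarrow> real \<Rightarrow> real" where
  "scheme_lhs h j r U xc yc =
     (let \<theta> = theta j r in
       alphaA h j r * (U (xc - \<theta> * h) (yc + h) + U (xc - \<theta> * h) (yc - h))
     + alphaB h j r * (U (xc + (1 - \<theta>) * h) (yc + h) + U (xc + (1 - \<theta>) * h) (yc - h))
     + alphaC h j r * U (xc - \<theta> * h) yc
     + alphaD h j r * U (xc + (1 - \<theta>) * h) yc
     + alphaP h j r * U xc yc)"

definition scheme_rhs ::
  "real \<Rightarrow> nat \<Rightarrow> nat \<Rightarrow> (real \<Rightarrow> real \<Rightarrow> real) \<Rightarrow> real \<Rightarrow> real \<Rightarrow> real" where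
  "scheme_rhs h j r f xc yc =
     (let \<theta> = theta j r in
       betaC j r * f (xc - \<theta> * h) yc + betaD j r * f (xc + (1 - \<theta>) * h) yc)"

end

theory Submission
  imports Defs
begin

lemma d2poly:
  "deriv (\<lambda>s. deriv (\<lambda>t. a + b*t + c*t^2 + d*t^3 + e*t^4) s) (x::real) = 2*c + 6*d*x + 12*e*x^2"
proof -
  have 1: "deriv (\<lambda>t. a + b*t + c*t^2 + d*t^3 + e*t^4) u = b + 2*c*u + 3*d*u^2 + 4*e*u^3" for u::real
    by (rule DERIV_imp_deriv) (auto intro!: derivative_eq_intros simp: power2_eq_square power3_eq_cube)
  show ?thesis unfolding 1
    by (rule DERIV_imp_deriv) (auto intro!: derivative_eq_intros simp: power2_eq_square)
qed

lemma poly2_x: "poly2 c x y = (\<Sum>k\<le>4. c 0 k * y^k) + (\<Sum>k\<le>4. c 1 k * y^k)*x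
  + (\<Sum>k\<le>4. c 2 k * y^k)*x^2 + (\<Sum>k\<le>4. c 3 k * y^k)*x^3 + (\<Sum>k\<le>4. c 4 k * y^k)*x^4"
  unfolding poly2_def by (simp add: numeral_eq_Suc atMost_Suc sum_distrib_right algebra_simps)

lemma poly2_y: "poly2 c x y = (\<Sum>i\<le>4. c i 0 * x^i) + (\<Sum>i\<le>4. c i 1 * x^i)*y
  + (\<Sum>i\<le>4. c i 2 * x^i)*y^2 + (\<Sum>i\<le>4. c i 3 * x^i)*y^3 + (\<Sum>i\<le>4. c i 4 * x^i)*y^4"
  unfolding poly2_def by (simp add: numeral_eq_Suc atMost_Suc sum_distrib_right algebra_simps)

lemma lap_poly2: "laplacian (poly2 c) x y =
   2*(\<Sum>k\<le>4. c 2 k * y^k) + 6*(\<Sum>k\<le>4. c 3 k * y^k)*x + 12*(\<Sum>k\<le>4. c 4 k * y^k)*x^2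
 + 2*(\<Sum>i\<le>4. c i 2 * x^i) + 6*(\<Sum>i\<le>4. c i 3 * x^i)*y + 12*(\<Sum>i\<le>4. c i 4 * x^i)*y^2"
  unfolding laplacian_def poly2_x[of c _ y] poly2_y[of c x] d2poly by simp

lemma poly2_expl:
  assumes "\<forall>i k. 4 < i + k \<longrightarrow> c i k = 0" "c 4 0 = 0" "c 0 4 = 0"
  shows "poly2 c x y = c 0 0 + c 1 0 * x + c 0 1 * y + c 2 0 * x^2 + c 1 1 * x * y + c 0 2 * y^2
    + c 3 0 * x^3 + c 2 1 * x^2 * y + c 1 2 * x * y^2 + c 0 3 * y^3
    + c 3 1 * x^3 * y + c 2 2 * x^2 * y^2 + c 1 3 * x * y^3"
  using assms unfolding poly2_def by (simp add: numeral_eq_Suc atMost_Suc)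

lemma lap_expl:
  assumes "\<forall>i k. 4 < i + k \<longrightarrow> c i k = 0" "c 4 0 = 0" "c 0 4 = 0"
  shows "laplacian (poly2 c) x y = 2*c 2 0 + 2*c 2 1*y + 2*c 2 2*y^2 + 6*c 3 0*x + 6*c 3 1*x*y
    + 2*c 0 2 + 2*c 1 2*x + 2*c 2 2*x^2 + 6*c 0 3*y + 6*c 1 3*x*y"
  using assms unfolding lap_poly2 by (simp add: numeral_eq_Suc atMost_Suc algebra_simps)


lemma exact:
  fixes t h xc yc :: real
  assumes "0 < t" "t < 1" "h > 0"
  and PP: "\<And>x y. P x y = c00 + c10 * x + c01 * y + c20 * x^2 + c11 * x * y + c02 * y^2
    + c30 * x^3 + c21 * x^2 * y + c12 * x * y^2 + c03 * y^3
    + c31 * x^3 * y + c22 * x^2 * y^2 + c13 * x * y^3"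
  and LL: "\<And>x y. L x y = 2*c20 + 2*c21*y + 2*c22*y^2 + 6*c30*x + 6*c31*x*y
    + 2*c02 + 2*c12*x + 2*c22*x^2 + 6*c03*y + 6*c13*x*y"
  shows "((2 - t) / 3 / h^2) * (P (xc - t*h) (yc+h) + P (xc - t*h) (yc-h))
   + ((1 + t) / 3 / h^2) * (P (xc + (1-t)*h) (yc+h) + P (xc + (1-t)*h) (yc-h))
   + ((2/t - 4/3 + 2*t/3) / h^2) * P (xc - t*h) yc
   + ((2/(1-t) - 4/3 + 2*(1-t)/3) / h^2) * P (xc + (1-t)*h) yc
   + (-2/(t*(1-t)) / h^2) * P xc yc
   = (2 - t)/3 * L (xc - t*h) yc + (1+t)/3 * L (xc + (1-t)*h) yc"
proof -
  have t1: "1 - t \<noteq> 0" "t \<noteq> 0" "h \<noteq> 0" using assms by auto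
  define K where "K = 3*t*(1-t)*h^2"
  have K0: "K \<noteq> 0" using t1 unfolding K_def by simp
  have e1: "(2 - t) / 3 / h^2 * K = (2-t)*t*(1-t)" "(1 + t) / 3 / h^2 * K = (1+t)*t*(1-t)"
    "(2/t - 4/3 + 2*t/3) / h^2 * K = 6*(1-t) - 4*t*(1-t) + 2*t^2*(1-t)"
    "(2/(1-t) - 4/3 + 2*(1-t)/3) / h^2 * K = 6*t - 4*t*(1-t) + 2*t*(1-t)^2"
    "(-2/(t*(1-t)) / h^2) * K = -6"
    using t1 unfolding K_def by (simp_all add: field_simps power2_eq_square)
  have poly: "(2-t)*t*(1-t) * (P (xc - t*h) (yc+h) + P (xc - t*h) (yc-h))
   + (1+t)*t*(1-t) * (P (xc + (1-t)*h) (yc+h) + P (xc + (1-t)*h) (yc-h))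
   + (6*(1-t) - 4*t*(1-t) + 2*t^2*(1-t)) * P (xc - t*h) yc
   + (6*t - 4*t*(1-t) + 2*t*(1-t)^2) * P (xc + (1-t)*h) yc
   + (-6) * P xc yc
   = t*(1-t)*h^2 * ((2 - t) * L (xc - t*h) yc + (1+t) * L (xc + (1-t)*h) yc)"
    unfolding PP LL by algebra
  have gen: "\<And>a b c d e X Y Z W V K::real. (a*X + b*Y + c*Z + d*W + e*V)*K = (a*K)*X + (b*K)*Y + (c*K)*Z + (d*K)*W + (e*K)*V"
    by algebra
  have gen2: "\<And>a b X Y::real. (a/3*X + b/3*Y)*K = t*(1-t)*h^2*(a*X+b*Y)"
    unfolding K_def by algebra
  show ?thesis
    apply (rule mult_right_cancel[OF K0, THEN iffD1])
    unfolding gen e1 poly gen2 ..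
qed

theorem mainTheorem2:
  fixes h xc yc :: real and r j :: nat
  assumes hpos: "h > 0"
    and r: "r \<in> {2, 4, 8, 16}"
    and j: "1 \<le> j" "j \<le> r - 1"
  shows
    "(betaC j r + betaD j r = 1 \<and> betaC j r > 0 \<and> betaD j r > 0 \<and>
      alphaA h j r > 0 \<and> alphaB h j r > 0 \<and> alphaC h j r > 0 \<and> alphaD h j r > 0 \<and>
      alphaP h j r < 0 \<and>
      alphaP h j r = - (2 * alphaA h j r + 2 * alphaB h j r + alphaC h j r + alphaD h j r))
   \<and> (alphaA h (r - j) r = alphaB h j r \<and> alphaB h (r - j) r = alphaA h j r \<and>
      alphaC h (r - j) r = alphaD h j r \<and> alphaD h (r - j) r = alphaC h j r \<and>
      alphaP h (r - j) r = alphaP h j r \<and>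
      betaC (r - j) r = betaD j r \<and> betaD (r - j) r = betaC j r)
   \<and> (\<forall>j' r'. r' > 0 \<and> real j' / real r' = real j / real r \<longrightarrow>
        alphaA h j' r' = alphaA h j r \<and> alphaB h j' r' = alphaB h j r \<and>
        alphaC h j' r' = alphaC h j r \<and> alphaD h j' r' = alphaD h j r \<and>
        alphaP h j' r' = alphaP h j r \<and>
        betaC j' r' = betaC j r \<and> betaD j' r' = betaD j r)
   \<and> (\<forall>c :: nat \<Rightarrow> nat \<Rightarrow> real.
        (\<forall>i k. 4 < i + k \<longrightarrow> c i k = 0) \<and> c 4 0 = 0 \<and> c 0 4 = 0 \<longrightarrow>
        scheme_lhs h j r (poly2 c) xc yc = scheme_rhs h j r (laplacian (poly2 c)) xc yc)"
proof -
  have r0: "r > 0" "real r > 0" using r by auto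
  have jr: "j < r" using j r0 by linarith
  define t where "t = theta j r"
  have t0: "0 < t" using j r0 unfolding t_def theta_def by simp
  have t1: "t < 1" using jr r0 unfolding t_def theta_def by simp
  have tr: "theta (r - j) r = 1 - t" using jr r0 unfolding t_def theta_def
    by (simp add: of_nat_diff field_simps)
  have h2: "h^2 > 0" using hpos by simp
  have P1: "betaC j r + betaD j r = 1 \<and> betaC j r > 0 \<and> betaD j r > 0 \<and>
      alphaA h j r > 0 \<and> alphaB h j r > 0 \<and> alphaC h j r > 0 \<and> alphaD h j r > 0 \<and>
      alphaP h j r < 0 \<and>
      alphaP h j r = - (2 * alphaA h j r + 2 * alphaB h j r + alphaC h j r + alphaD h j r)"
  proof -
    have c1: "2/t - 4/3 + 2*t/3 > 0"
    proof -
      have "2/t > 2" using t0 t1 by (simp add: field_simps)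
      then show ?thesis using t0 by linarith
    qed
    have c2: "2/(1-t) - 4/3 + 2*(1-t)/3 > 0"
    proof -
      have "2/(1-t) > 2" using t0 t1 by (simp add: field_simps)
      moreover have "2*(1-t)/3 > 0" using t1 by simp
      ultimately show ?thesis by linarith
    qed
    have c3: "-2/(t*(1-t)) < 0" using t0 t1 by (simp add: field_simps)
    have c4: "-2/(t*(1-t)) = -(2*((2-t)/3) + 2*((1+t)/3) + (2/t - 4/3 + 2*t/3) + (2/(1-t) - 4/3 + 2*(1-t)/3))"
      using t0 t1 by (simp add: field_simps)
    have c5: "(2-t)/3 > 0" "(1+t)/3 > 0" "(2-t)/3 + (1+t)/3 = 1" using t1 t0 by (auto simp: field_simps)
    have c6: "-2/(t*(1-t))/h^2 = -(2*((2-t)/3/h^2) + 2*((1+t)/3/h^2) + (2/t - 4/3 + 2*t/3)/h^2 + (2/(1-t) - 4/3 + 2*(1-t)/3)/h^2)"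
      unfolding c4 by (simp add: add_divide_distrib diff_divide_distrib)
    show ?thesis unfolding alphaA_def alphaB_def alphaC_def alphaD_def alphaP_def betaC_def betaD_def t_def[symmetric]
      using c5 c6 divide_neg_pos[OF c3 h2] divide_pos_pos[OF c1 h2] divide_pos_pos[OF c2 h2]
        divide_pos_pos[OF c5(1) h2] divide_pos_pos[OF c5(2) h2] by blast
  qed
  have P2: "alphaA h (r - j) r = alphaB h j r \<and> alphaB h (r - j) r = alphaA h j r \<and>
      alphaC h (r - j) r = alphaD h j r \<and> alphaD h (r - j) r = alphaC h j r \<and>
      alphaP h (r - j) r = alphaP h j r \<and>
      betaC (r - j) r = betaD j r \<and> betaD (r - j) r = betaC j r"
    unfolding alphaA_def alphaB_def alphaC_def alphaD_def alphaP_def betaC_def betaD_def tr t_def[symmetric]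
    by (simp add: algebra_simps)
  have P3: "\<forall>j' r'. r' > 0 \<and> real j' / real r' = real j / real r \<longrightarrow>
        alphaA h j' r' = alphaA h j r \<and> alphaB h j' r' = alphaB h j r \<and>
        alphaC h j' r' = alphaC h j r \<and> alphaD h j' r' = alphaD h j r \<and>
        alphaP h j' r' = alphaP h j r \<and>
        betaC j' r' = betaC j r \<and> betaD j' r' = betaD j r"
    unfolding alphaA_def alphaB_def alphaC_def alphaD_def alphaP_def betaC_def betaD_def theta_def
    by simp
  have P4: "\<forall>c :: nat \<Rightarrow> nat \<Rightarrow> real.
        (\<forall>i k. 4 < i + k \<longrightarrow> c i k = 0) \<and> c 4 0 = 0 \<and> c 0 4 = 0 \<longrightarrow>
        scheme_lhs h j r (poly2 c) xc yc = scheme_rhs h j r (laplacian (poly2 c)) xc yc"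
  proof (intro allI impI)
    fix c :: "nat \<Rightarrow> nat \<Rightarrow> real"
    assume a: "(\<forall>i k. 4 < i + k \<longrightarrow> c i k = 0) \<and> c 4 0 = 0 \<and> c 0 4 = 0"
    show "scheme_lhs h j r (poly2 c) xc yc = scheme_rhs h j r (laplacian (poly2 c)) xc yc"
      unfolding scheme_lhs_def scheme_rhs_def Let_def alphaA_def alphaB_def alphaC_def alphaD_def
        alphaP_def betaC_def betaD_def t_def[symmetric]
      by (rule exact[OF t0 t1 hpos poly2_expl[OF conjunct1[OF a] conjunct1[OF conjunct2[OF a]] conjunct2[OF conjunct2[OF a]]]
           lap_expl[OF conjunct1[OF a] conjunct1[OF conjunct2[OF a]] conjunct2[OF conjunct2[OF a]]]])
  qed
  show ?thesis using P1 P2 P3 P4 by blast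
qed

end
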